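(* For $\mu\in\mathbb{R}$, $\sigma>0$, $\alpha\in\mathbb{R}$, let $X\sim\mathcal{N}(\mu,\sigma)$ and define $I(\mu,\sigma,\alpha)=(\mu-\alpha)\left(1-F_X(\alpha)\right)+\sigma^2 f_X(\alpha)$. Then $I$ is always convex in $\mu$, i.e. $\frac{\partial^2}{\partial\mu^2}I(\mu,\sigma,\alpha)\ge0$, and $I$ is convex in $\sigma$, i.e. $\frac{\partial^2}{\partial\sigma^2}I(\mu,\sigma,\alpha)\ge0$, whenever $\alpha\le\mu-\sqrt{\tfrac32}\,\sigma$ or $\alpha\ge\mu+\sqrt{\tfrac32}\,\sigma$.
   Context: $\mathcal{N}(\mu,\sigma)$ denotes the normal distribution with mean $\mu$ and standard deviation $\sigma$; $f_X$ and $F_X$ are the density and cumulative distribution function of $X$ (which depend on $\mu,\sigma$). *)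

theory Defs
  imports "HOL-Probability.Probability"
begin

definition normal_pdf :: "real \<Rightarrow> real \<Rightarrow> real \<Rightarrow> real" where
  "normal_pdf \<mu> \<sigma> x = normal_density \<mu> \<sigma> x"

definition normal_cdf :: "real \<Rightarrow> real \<Rightarrow> real \<Rightarrow> real" where
  "normal_cdf \<mu> \<sigma> x = cdf (density lborel (normal_density \<mu> \<sigma>)) x"

definition I_fun :: "real \<Rightarrow> real \<Rightarrow> real \<Rightarrow> real" where
  "I_fun \<mu> \<sigma> \<alpha> = (\<mu> - \<alpha>) * (1 - normal_cdf \<mu> \<sigma> \<alpha>) + \<sigma>\<^sup>2 * normal_pdf \<mu> \<sigma> \<alpha>"

end

theory Submission
  imports Defs
begin

definition Phi :: "real \<Rightarrow> real" where
  "Phi x = cdf (density lborel std_normal_density) x"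

lemma cont_std: "continuous_on A std_normal_density"
  unfolding std_normal_density_def by (auto intro!: continuous_intros)

lemma Phi_diff:
  assumes "a \<le> u"
  shows "Phi u - Phi a = integral {a..u} std_normal_density"
proof -
  let ?M = "density lborel std_normal_density"
  interpret prob_space ?M by (rule prob_space_normal_density) simp
  have "Phi u - Phi a = measure ?M ({..u} - {..a})"
    unfolding Phi_def cdf_def using assms
    by (subst finite_measure_Diff) auto
  also have "{..u} - {..a} = {a<..u}" by auto
  also have "(std_normal_density has_integral integral {a..u} std_normal_density) {a<..u}"
  proof -
    have "(std_normal_density has_integral integral {a..u} std_normal_density) {a..u}"
      using integrable_continuous_interval[OF cont_std] by (simp add: integrable_integral)
    then show ?thesis
      by (subst has_integral_spike_set_eq[where T="{a..u}"])
        (auto intro: negligible_subset[OF negligible_sing[of a]])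
  qed
  then have "emeasure ?M {a<..u} = ennreal (integral {a..u} std_normal_density)"
    by (subst emeasure_density) (auto intro!: nn_integral_has_integral_lebesgue')
  then have "measure ?M {a<..u} = integral {a..u} std_normal_density"
    unfolding measure_def using integral_nonneg[OF integrable_continuous_interval[OF cont_std]]
    by (simp add: integral_nonneg)
  finally show ?thesis .
qed

lemma Phi_deriv: "(Phi has_real_derivative std_normal_density x) (at x)"
proof -
  let ?a = "x - 1" and ?b = "x + 1"
  have "((\<lambda>u. integral {?a..u} std_normal_density) has_vector_derivative std_normal_density x) (at x within {?a..?b})"
    by (rule integral_has_vector_derivative[OF cont_std]) auto
  also have "at x within {?a..?b} = at x" by (rule at_within_Icc_at) auto
  finally have "((\<lambda>u. Phi ?a + integral {?a..u} std_normal_density) has_real_derivative std_normal_density x) (at x)"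
    by (auto intro!: derivative_eq_intros simp: has_real_derivative_iff_has_vector_derivative[symmetric])
  then show ?thesis
  proof (rule has_field_derivative_transform_within_open[where S="{?a<..<?b}"])
    fix y assume "y \<in> {?a<..<?b}"
    then show "Phi ?a + integral {?a..y} std_normal_density = Phi y" using Phi_diff[of ?a y] by simp
  qed auto
qed

lemma Phi_chain[derivative_intros]:
  "(f has_real_derivative f') (at x within s) \<Longrightarrow>
   ((\<lambda>x. Phi (f x)) has_real_derivative std_normal_density (f x) * f') (at x within s)"
  using DERIV_chain2[OF Phi_deriv] by blast

lemma phi_deriv: "(std_normal_density has_real_derivative (- x * std_normal_density x)) (at x)"
  unfolding std_normal_density_def
  by (auto intro!: derivative_eq_intros simp: field_simps)

lemma phi_chain[derivative_intros]:
  "(f has_real_derivative f') (at x within s) \<Longrightarrow>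
   ((\<lambda>x. std_normal_density (f x)) has_real_derivative (- f x * std_normal_density (f x)) * f') (at x within s)"
  using DERIV_chain2[OF phi_deriv] by blast

lemma nd_std: "\<sigma> > 0 \<Longrightarrow> normal_density \<mu> \<sigma> x = std_normal_density ((x - \<mu>) / \<sigma>) / \<sigma>"
  unfolding normal_density_def by (simp add: real_sqrt_mult power_divide)

lemma cdf_std:
  assumes "\<sigma> > 0"
  shows "normal_cdf \<mu> \<sigma> \<alpha> = Phi ((\<alpha> - \<mu>) / \<sigma>)"
proof -
  have "emeasure (density lborel (normal_density \<mu> \<sigma>)) {..\<alpha>}
      = (\<integral>\<^sup>+x. ennreal (normal_density \<mu> \<sigma> x) * indicator {..\<alpha>} x \<partial>lborel)"
    by (simp add: emeasure_density)
  also have "\<dots> = ennreal \<sigma> * (\<integral>\<^sup>+x. ennreal (normal_density \<mu> \<sigma> (\<mu> + \<sigma> * x)) * indicator {..\<alpha>} (\<mu> + \<sigma> * x) \<partial>lborel)"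
    using nn_integral_real_affine[where c=\<sigma> and t=\<mu> and f="\<lambda>x. ennreal (normal_density \<mu> \<sigma> x) * indicator {..\<alpha>} x"] assms
    by simp
  also have "\<dots> = (\<integral>\<^sup>+x. ennreal \<sigma> * (ennreal (normal_density \<mu> \<sigma> (\<mu> + \<sigma> * x)) * indicator {..\<alpha>} (\<mu> + \<sigma> * x)) \<partial>lborel)"
    by (rule nn_integral_cmult[symmetric]) auto
  also have "\<dots> = (\<integral>\<^sup>+x. ennreal (std_normal_density x) * indicator {..(\<alpha> - \<mu>) / \<sigma>} x \<partial>lborel)"
  proof (rule nn_integral_cong)
    fix x
    have "\<sigma> * normal_density \<mu> \<sigma> (\<mu> + \<sigma> * x) = std_normal_density x"
      using assms nd_std[OF assms, of \<mu> "\<mu> + \<sigma> * x"] by simp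
    moreover have "(\<mu> + \<sigma> * x \<le> \<alpha>) = (x \<le> (\<alpha> - \<mu>) / \<sigma>)"
      using assms by (simp add: field_simps)
    ultimately show "ennreal \<sigma> * (ennreal (normal_density \<mu> \<sigma> (\<mu> + \<sigma> * x)) * indicator {..\<alpha>} (\<mu> + \<sigma> * x)) = ennreal (std_normal_density x) * indicator {..(\<alpha> - \<mu>) / \<sigma>} x"
      using assms by (simp add: indicator_def mult.assoc[symmetric] ennreal_mult[symmetric])
  qed
  also have "\<dots> = emeasure (density lborel std_normal_density) {..(\<alpha> - \<mu>) / \<sigma>}"
    by (subst emeasure_density) auto
  finally show ?thesis
    unfolding normal_cdf_def Phi_def cdf_def measure_def by simp
qed


theorem lemma5:
  fixes \<mu> \<sigma> \<alpha> :: real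
  assumes "\<sigma> > 0"
  shows "deriv (deriv (\<lambda>m. I_fun m \<sigma> \<alpha>)) \<mu> \<ge> 0 \<and>
         ((\<alpha> \<le> \<mu> - sqrt (3/2) * \<sigma> \<or> \<alpha> \<ge> \<mu> + sqrt (3/2) * \<sigma>) \<longrightarrow>
           deriv (deriv (\<lambda>s. I_fun \<mu> s \<alpha>)) \<sigma> \<ge> 0)"
proof -
  have Im: "(\<lambda>m. I_fun m \<sigma> \<alpha>) = (\<lambda>m. (m - \<alpha>) * (1 - Phi ((\<alpha> - m) / \<sigma>)) + \<sigma> * std_normal_density ((\<alpha> - m) / \<sigma>))"
  proof
    fix m
    show "I_fun m \<sigma> \<alpha> = (m - \<alpha>) * (1 - Phi ((\<alpha> - m) / \<sigma>)) + \<sigma> * std_normal_density ((\<alpha> - m) / \<sigma>)"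
      unfolding I_fun_def normal_pdf_def cdf_std[OF assms] nd_std[OF assms, of m \<alpha>]
      using assms by (simp add: power2_eq_square)
  qed
  have d1: "((\<lambda>m. I_fun m \<sigma> \<alpha>) has_real_derivative (1 - Phi ((\<alpha> - m) / \<sigma>))) (at m)" for m
    unfolding Im
    using assms by (auto intro!: derivative_eq_intros simp: field_simps)
  have D1: "deriv (\<lambda>m. I_fun m \<sigma> \<alpha>) = (\<lambda>m. 1 - Phi ((\<alpha> - m) / \<sigma>))"
    using d1 DERIV_imp_deriv by blast
  have d2: "((\<lambda>m. 1 - Phi ((\<alpha> - m) / \<sigma>)) has_real_derivative std_normal_density ((\<alpha> - \<mu>) / \<sigma>) / \<sigma>) (at \<mu>)"
    using assms by (auto intro!: derivative_eq_intros simp: field_simps)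
  have part1: "deriv (deriv (\<lambda>m. I_fun m \<sigma> \<alpha>)) \<mu> \<ge> 0"
    unfolding D1 DERIV_imp_deriv[OF d2] using assms by simp
  define c where "c = \<alpha> - \<mu>"
  let ?g = "\<lambda>s. (\<mu> - \<alpha>) * (1 - Phi (c / s)) + s * std_normal_density (c / s)"
  have Is: "I_fun \<mu> s \<alpha> = ?g s" if "s > 0" for s
    unfolding I_fun_def normal_pdf_def cdf_std[OF that] nd_std[OF that, of \<mu> \<alpha>] c_def
    using that by (simp add: power2_eq_square)
  have ds: "((\<lambda>s. I_fun \<mu> s \<alpha>) has_real_derivative std_normal_density (c / s)) (at s)" if "s > 0" for s
  proof -
    have "(?g has_real_derivative std_normal_density (c / s)) (at s)"
      using that by (auto intro!: derivative_eq_intros simp: field_simps c_def power2_eq_square)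
    then show ?thesis
      by (rule has_field_derivative_transform_within_open[where S="{0<..}"]) (use that Is in auto)
  qed
  have dds: "(deriv (\<lambda>s. I_fun \<mu> s \<alpha>) has_real_derivative c\<^sup>2 * std_normal_density (c / \<sigma>) / \<sigma> ^ 3) (at \<sigma>)"
  proof -
    have "((\<lambda>s. std_normal_density (c / s)) has_real_derivative c\<^sup>2 * std_normal_density (c / \<sigma>) / \<sigma> ^ 3) (at \<sigma>)"
      using assms by (auto intro!: derivative_eq_intros simp: field_simps power2_eq_square power3_eq_cube)
    then show ?thesis
      by (rule has_field_derivative_transform_within_open[where S="{0<..}"])
        (use assms in \<open>auto intro!: DERIV_imp_deriv[symmetric] ds\<close>)
  qed
  have part2: "deriv (deriv (\<lambda>s. I_fun \<mu> s \<alpha>)) \<sigma> \<ge> 0"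
    unfolding DERIV_imp_deriv[OF dds] using assms by simp
  show ?thesis using part1 part2 by simp
qed

end
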